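(* Let $(X,d)$ be a compact metric space, $f_{1,\infty}$ an $m$-periodic sequence of continuous surjective self-maps of $X$, and $g=f_m\circ\cdots\circ f_1$. If the autonomous system $(X,g)$ is topologically transitive and has a dense set of periodic points, then $(X,f_{1,\infty})$ is Devaney chaotic.
   Context: $m$-periodic: $f_{n+m}=f_n$ for all $n$. Write $f_1^n=f_n\circ\cdots\circ f_1$. For the non-autonomous system: topologically transitive means for all non-empty open $U,V$ some $n$ with $f_1^n(U)\cap V\ne\emptyset$; a point $x$ is periodic if there is $n$ with $f_1^{nk}(x)=x$ for all $k\in\mathbb{N}$; sensitive means there is $\delta>0$ such that for every $x$ and neighbourhood $U$ of $x$ there exist $y\in U$, $n$ with $d(f_1^n(x),f_1^n(y))>\delta$; Devaney chaotic means topologically transitive, dense periodic points, and sensitive. For the autonomous system $(X,g)$ these notions are the usual ones with $g^n$ in place of $f_1^n$. *)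

theory Defs
  imports "HOL-Analysis.Analysis"
begin

fun nas_iter :: "(nat \<Rightarrow> 'a \<Rightarrow> 'a) \<Rightarrow> nat \<Rightarrow> 'a \<Rightarrow> 'a" where
  "nas_iter f 0 = id"
| "nas_iter f (Suc n) = f (Suc n) \<circ> nas_iter f n"

definition nas_transitive :: "'a::metric_space set \<Rightarrow> (nat \<Rightarrow> 'a \<Rightarrow> 'a) \<Rightarrow> bool" where
  "nas_transitive X f \<longleftrightarrow>
     (\<forall>U V. openin (top_of_set X) U \<longrightarrow> openin (top_of_set X) V \<longrightarrow> U \<noteq> {} \<longrightarrow> V \<noteq> {} \<longrightarrow>
        (\<exists>n>0. nas_iter f n ` U \<inter> V \<noteq> {}))"

definition nas_periodic_point :: "(nat \<Rightarrow> 'a \<Rightarrow> 'a) \<Rightarrow> 'a \<Rightarrow> bool" where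
  "nas_periodic_point f x \<longleftrightarrow> (\<exists>n>0. \<forall>k>0. nas_iter f (n * k) x = x)"

definition nas_dense_periodic :: "'a::metric_space set \<Rightarrow> (nat \<Rightarrow> 'a \<Rightarrow> 'a) \<Rightarrow> bool" where
  "nas_dense_periodic X f \<longleftrightarrow> X \<subseteq> closure {x \<in> X. nas_periodic_point f x}"

definition nas_sensitive :: "'a::metric_space set \<Rightarrow> (nat \<Rightarrow> 'a \<Rightarrow> 'a) \<Rightarrow> bool" where
  "nas_sensitive X f \<longleftrightarrow>
     (\<exists>\<delta>>0. \<forall>x\<in>X. \<forall>U. openin (top_of_set X) U \<longrightarrow> x \<in> U \<longrightarrow>
        (\<exists>y\<in>U. \<exists>n. dist (nas_iter f n x) (nas_iter f n y) > \<delta>))"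

definition nas_devaney_chaotic :: "'a::metric_space set \<Rightarrow> (nat \<Rightarrow> 'a \<Rightarrow> 'a) \<Rightarrow> bool" where
  "nas_devaney_chaotic X f \<longleftrightarrow> nas_transitive X f \<and> nas_dense_periodic X f \<and> nas_sensitive X f"

text \<open>Autonomous notions for (X,g): the constant sequence g, g, g, ... gives g^n.\<close>

definition aut_transitive :: "'a::metric_space set \<Rightarrow> ('a \<Rightarrow> 'a) \<Rightarrow> bool" where
  "aut_transitive X g \<longleftrightarrow>
     (\<forall>U V. openin (top_of_set X) U \<longrightarrow> openin (top_of_set X) V \<longrightarrow> U \<noteq> {} \<longrightarrow> V \<noteq> {} \<longrightarrow>
        (\<exists>n>0. (g ^^ n) ` U \<inter> V \<noteq> {}))"

definition aut_periodic_point :: "('a \<Rightarrow> 'a) \<Rightarrow> 'a \<Rightarrow> bool" where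
  "aut_periodic_point g x \<longleftrightarrow> (\<exists>n>0. (g ^^ n) x = x)"

definition aut_dense_periodic :: "'a::metric_space set \<Rightarrow> ('a \<Rightarrow> 'a) \<Rightarrow> bool" where
  "aut_dense_periodic X g \<longleftrightarrow> X \<subseteq> closure {x \<in> X. aut_periodic_point g x}"

end

theory Submission
  imports Defs
begin

lemma funpow_period:
  assumes "(g ^^ p) x = x" shows "(g ^^ (p * k)) x = x"
proof (induction k)
  case 0 then show ?case by simp
next
  case (Suc k)
  have "(g ^^ (p * Suc k)) x = (g ^^ p) ((g ^^ (p * k)) x)"
    by (simp add: funpow_add)
  then show ?case using Suc assms by simp
qed

lemma funpow_mod:
  assumes "(g ^^ p) x = x" shows "(g ^^ i) x = (g ^^ (i mod p)) x"
proof -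
  have "i = i mod p + p * (i div p)" by simp
  then have "(g ^^ i) x = (g ^^ (i mod p)) ((g ^^ (p * (i div p))) x)"
    by (metis comp_apply funpow_add)
  then show ?thesis using funpow_period[OF assms] by simp
qed

lemma funpow_cont:
  assumes "continuous_on X g" "g ` X \<subseteq> X"
  shows "continuous_on X (g ^^ i) \<and> (g ^^ i) ` X \<subseteq> X"
proof (induction i)
  case 0 then show ?case by (simp add: continuous_on_id)
next
  case (Suc i)
  have "continuous_on X (g \<circ> (g ^^ i))"
    by (rule continuous_on_compose) (use Suc assms continuous_on_subset in blast)+
  moreover have "(g \<circ> (g ^^ i)) ` X \<subseteq> X" using Suc assms by auto
  ultimately show ?case by simp
qed

lemma unif_eps:
  fixes g :: "'a::metric_space \<Rightarrow> 'a"
  assumes "\<And>i. continuous_on X (g ^^ i)" "q \<in> X" "\<delta> > 0"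
  shows "\<exists>\<epsilon>>0. \<forall>z\<in>X. dist z q < \<epsilon> \<longrightarrow> (\<forall>i\<le>n. dist ((g ^^ i) z) ((g ^^ i) q) < \<delta>)"
proof (induction n)
  case 0 then show ?case using assms(3) by (intro exI[of _ \<delta>]) auto
next
  case (Suc n)
  then obtain e where e: "e > 0" "\<forall>z\<in>X. dist z q < e \<longrightarrow> (\<forall>i\<le>n. dist ((g ^^ i) z) ((g ^^ i) q) < \<delta>)"
    by blast
  from assms(1)[of "Suc n"] assms(2,3) obtain d where d: "d > 0"
    "\<forall>z\<in>X. dist z q < d \<longrightarrow> dist ((g ^^ Suc n) z) ((g ^^ Suc n) q) < \<delta>"
    unfolding continuous_on_iff by blast
  show ?case
  proof (intro exI[of _ "min e d"] conjI ballI impI allI)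
    show "min e d > 0" using e d by simp
    fix z i assume z: "z \<in> X" "dist z q < min e d" and i: "i \<le> Suc n"
    show "dist ((g ^^ i) z) ((g ^^ i) q) < \<delta>"
    proof (cases "i = Suc n")
      case True then show ?thesis using d z by auto
    next
      case False then show ?thesis using e z i by auto
    qed
  qed
qed

lemma banks:
  fixes X :: "'a::metric_space set" and g :: "'a \<Rightarrow> 'a"
  assumes cont: "\<And>i. continuous_on X (g ^^ i)" and inv: "\<And>i. (g ^^ i) ` X \<subseteq> X"
    and inf: "infinite X" and tr: "aut_transitive X g" and dp: "aut_dense_periodic X g"
  shows "\<exists>\<delta>>0. \<forall>x\<in>X. \<forall>U. openin (top_of_set X) U \<longrightarrow> x \<in> U \<longrightarrow>
            (\<exists>y\<in>U. \<exists>N. dist ((g ^^ N) x) ((g ^^ N) y) > \<delta>)"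
proof -
  define P where "P = {x\<in>X. aut_periodic_point g x}"
  have PX: "P \<subseteq> X" unfolding P_def by auto
  have XP: "X \<subseteq> closure P" using dp unfolding aut_dense_periodic_def P_def by simp
  have infP: "infinite P"
  proof
    assume "finite P"
    then have "closure P = P" using finite_imp_closed closure_closed by blast
    then have "X \<subseteq> P" using XP by simp
    then show False using inf \<open>finite P\<close> finite_subset by blast
  qed
  have "P \<noteq> {}" using infP infinite_imp_nonempty by blast
  then obtain q1 where q1: "q1 \<in> P" by blast
  then obtain p1 where p1: "p1 > 0" "(g ^^ p1) q1 = q1"
    unfolding P_def aut_periodic_point_def by blast
  define O1 where "O1 = range (\<lambda>i. (g ^^ i) q1)"
  have "O1 = (\<lambda>i. (g ^^ i) q1) ` {..<p1}"
  proof
    show "O1 \<subseteq> (\<lambda>i. (g ^^ i) q1) ` {..<p1}"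
    proof
      fix z assume "z \<in> O1"
      then obtain i where "z = (g ^^ i) q1" unfolding O1_def by blast
      then have "z = (g ^^ (i mod p1)) q1" using funpow_mod[OF p1(2)] by simp
      moreover have "i mod p1 < p1" using p1 by simp
      ultimately show "z \<in> (\<lambda>i. (g ^^ i) q1) ` {..<p1}" by blast
    qed
  qed (auto simp: O1_def)
  then have finO1: "finite O1" by simp
  have "infinite (P - O1)" using infP finO1 Diff_infinite_finite by blast
  then have "P - O1 \<noteq> {}" using infinite_imp_nonempty by blast
  then obtain q2 where q2: "q2 \<in> P" "q2 \<notin> O1" by blast
  then obtain p2 where p2: "p2 > 0" "(g ^^ p2) q2 = q2"
    unfolding P_def aut_periodic_point_def by blast
  define O2 where "O2 = range (\<lambda>i. (g ^^ i) q2)"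
  have "O2 = (\<lambda>i. (g ^^ i) q2) ` {..<p2}"
  proof
    show "O2 \<subseteq> (\<lambda>i. (g ^^ i) q2) ` {..<p2}"
    proof
      fix z assume "z \<in> O2"
      then obtain i where "z = (g ^^ i) q2" unfolding O2_def by blast
      then have "z = (g ^^ (i mod p2)) q2" using funpow_mod[OF p2(2)] by simp
      moreover have "i mod p2 < p2" using p2 by simp
      ultimately show "z \<in> (\<lambda>i. (g ^^ i) q2) ` {..<p2}" by blast
    qed
  qed (auto simp: O2_def)
  then have finO2: "finite O2" by simp
  have disj: "(g ^^ i) q1 \<noteq> (g ^^ j) q2" for i j
  proof
    assume eq: "(g ^^ i) q1 = (g ^^ j) q2"
    define M where "M = p2 * (j + 1)"
    have Mj: "M = (M - j) + j" using p2(1) unfolding M_def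
      by (simp add: add.commute le_add1 trans_le_add2)
    have "(g ^^ M) q2 = q2" unfolding M_def by (rule funpow_period[OF p2(2)])
    then have "q2 = (g ^^ M) q2" by (rule sym)
    also have "\<dots> = (g ^^ (M - j)) ((g ^^ j) q2)" by (subst Mj) (simp add: funpow_add)
    also have "\<dots> = (g ^^ (M - j)) ((g ^^ i) q1)" using eq by simp
    also have "\<dots> = (g ^^ (M - j + i)) q1" by (simp add: funpow_add)
    finally have "q2 \<in> O1" unfolding O1_def by blast
    then show False using q2 by simp
  qed
  define D where "D = (\<lambda>(a,b). dist a b) ` (O1 \<times> O2)"
  have finD: "finite D" unfolding D_def using finO1 finO2 by simp
  have neD: "D \<noteq> {}" unfolding D_def O1_def O2_def by auto
  define \<delta>0 where "\<delta>0 = Min D"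
  have "\<delta>0 \<in> D" unfolding \<delta>0_def using finD neD Min_in by blast
  then have d0pos: "\<delta>0 > 0" unfolding D_def O1_def O2_def using disj by auto
  have sep: "\<delta>0 \<le> dist ((g ^^ i) q1) ((g ^^ j) q2)" for i j
  proof -
    have "dist ((g ^^ i) q1) ((g ^^ j) q2) \<in> D" unfolding D_def O1_def O2_def by force
    then show ?thesis unfolding \<delta>0_def using finD Min_le by blast
  qed
  define \<delta> where "\<delta> = \<delta>0 / 8"
  have dpos: "\<delta> > 0" using d0pos \<delta>_def by simp
  have far: "\<exists>q\<in>P. \<forall>i. 4 * \<delta> \<le> dist x ((g ^^ i) q)" for x
  proof (rule ccontr)
    assume "\<not> ?thesis"
    then obtain i j where ij: "dist x ((g ^^ i) q1) < 4 * \<delta>" "dist x ((g ^^ j) q2) < 4 * \<delta>"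
      using q1 q2 by (meson not_le)
    have "dist ((g ^^ i) q1) ((g ^^ j) q2) \<le> dist x ((g ^^ i) q1) + dist x ((g ^^ j) q2)"
      by (rule dist_triangle3)
    then show False using ij sep[of i j] \<delta>_def by linarith
  qed
  show ?thesis
  proof (intro exI[of _ \<delta>] conjI allI ballI impI)
    show "\<delta> > 0" by (rule dpos)
    fix x U assume xX: "x \<in> X" and U: "openin (top_of_set X) U" and xU: "x \<in> U"
    obtain q where q: "q \<in> P" "\<forall>i. 4 * \<delta> \<le> dist x ((g ^^ i) q)" using far by blast
    have qX: "q \<in> X" using q PX by blast
    define U' where "U' = U \<inter> ball x \<delta>"
    have UX: "U \<subseteq> X" using U openin_imp_subset by blast
    have "U' = U \<inter> (X \<inter> ball x \<delta>)" unfolding U'_def using UX by blast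
    moreover have "openin (top_of_set X) (X \<inter> ball x \<delta>)" by (simp add: openin_open_Int)
    ultimately have U'o: "openin (top_of_set X) U'" using openin_Int[OF U] by simp
    have xU': "x \<in> U'" unfolding U'_def using xU dpos by simp
    obtain T where T: "open T" "U' = X \<inter> T" using U'o unfolding openin_open by blast
    have "x \<in> T \<inter> closure P" using xU' T XP xX by blast
    then have "T \<inter> P \<noteq> {}" using open_Int_closure_eq_empty[OF T(1)] by blast
    then obtain p where pTP: "p \<in> T" "p \<in> P" by blast
    then have pU': "p \<in> U'" using T PX by blast
    obtain n where n: "n > 0" "(g ^^ n) p = p"
      using pTP unfolding P_def aut_periodic_point_def by blast
    obtain \<epsilon> where eps: "\<epsilon> > 0" "\<forall>z\<in>X. dist z q < \<epsilon> \<longrightarrow> (\<forall>i\<le>n. dist ((g ^^ i) z) ((g ^^ i) q) < \<delta>)"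
      using unif_eps[OF cont qX dpos] by blast
    define V where "V = X \<inter> ball q \<epsilon>"
    have Vo: "openin (top_of_set X) V" unfolding V_def by (simp add: openin_open_Int)
    have qV: "q \<in> V" unfolding V_def using qX eps by simp
    obtain k where k: "k > 0" "(g ^^ k) ` U' \<inter> V \<noteq> {}"
      using tr Vo qV U'o xU' unfolding aut_transitive_def by blast
    then obtain y where y: "y \<in> U'" "(g ^^ k) y \<in> V" by blast
    define N where "N = n * (k div n + 1)"
    define r where "r = N - k"
    have kdm: "k = n * (k div n) + k mod n" by simp
    have "k mod n < n" using n by simp
    have Ne: "N = n * (k div n) + n" by (simp add: N_def algebra_simps)
    have kN: "k \<le> N" "r \<le> n" proof -
      show "k \<le> N" using Ne kdm \<open>k mod n < n\<close> by linarith
      then show "r \<le> n" unfolding r_def using Ne kdm by linarith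
    qed
    have "(g ^^ N) y = (g ^^ r) ((g ^^ k) y)"
    proof -
      have "N = r + k" using kN unfolding r_def by simp
      then show ?thesis by (simp add: funpow_add)
    qed
    moreover have "dist ((g ^^ r) ((g ^^ k) y)) ((g ^^ r) q) < \<delta>"
      using eps(2) y(2) kN(2) unfolding V_def by (auto simp: dist_commute)
    ultimately have A: "dist ((g ^^ N) y) ((g ^^ r) q) < \<delta>" by simp
    have B: "(g ^^ N) p = p" unfolding N_def by (rule funpow_period[OF n(2)])
    have C: "4 * \<delta> \<le> dist x ((g ^^ r) q)" using q by simp
    have Dx: "dist x p < \<delta>" using pU' unfolding U'_def by simp
    have t1: "dist x ((g ^^ r) q) \<le> dist x p + dist p ((g ^^ r) q)" by (rule dist_triangle)
    have t2: "dist p ((g ^^ r) q) \<le> dist p ((g ^^ N) y) + dist ((g ^^ N) y) ((g ^^ r) q)" by (rule dist_triangle)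
    from t1 t2 have "dist x ((g ^^ r) q) \<le> dist x p + dist p ((g ^^ N) y) + dist ((g ^^ N) y) ((g ^^ r) q)"
      by linarith
    then have E: "2 * \<delta> < dist ((g ^^ N) p) ((g ^^ N) y)" unfolding B using A C Dx by linarith
    have "dist ((g ^^ N) p) ((g ^^ N) y) \<le> dist ((g ^^ N) x) ((g ^^ N) p) + dist ((g ^^ N) x) ((g ^^ N) y)"
      by (rule dist_triangle3)
    then have "\<delta> < dist ((g ^^ N) x) ((g ^^ N) p) \<or> \<delta> < dist ((g ^^ N) x) ((g ^^ N) y)"
      using E by linarith
    moreover have "p \<in> U" "y \<in> U" using pU' y unfolding U'_def by auto
    ultimately show "\<exists>y\<in>U. \<exists>N. \<delta> < dist ((g ^^ N) x) ((g ^^ N) y)" by blast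
  qed
qed

theorem mainTheorem17:
  fixes X :: "'a::metric_space set" and f :: "nat \<Rightarrow> 'a \<Rightarrow> 'a" and m :: nat
  assumes "compact X"
    and "infinite X"
    and "m > 0"
    and "\<And>n. n > 0 \<Longrightarrow> f (n + m) = f n"
    and "\<And>n. n > 0 \<Longrightarrow> continuous_on X (f n)"
    and "\<And>n. n > 0 \<Longrightarrow> f n ` X = X"
    and "aut_transitive X (nas_iter f m)"
    and "aut_dense_periodic X (nas_iter f m)"
  shows "nas_devaney_chaotic X f"
proof -
  define g where "g = nas_iter f m"
  have shift: "nas_iter f (n + m) = nas_iter f n \<circ> g" for n
  proof (induction n)
    case 0 then show ?case by (simp add: g_def)
  next
    case (Suc n)
    have "nas_iter f (Suc n + m) = f (Suc n + m) \<circ> nas_iter f (n + m)" by simp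
    also have "\<dots> = f (Suc n) \<circ> (nas_iter f n \<circ> g)" using Suc assms(4)[of "Suc n"] by (simp add: comp_def)
    finally show ?case by (simp add: comp_assoc)
  qed
  have km: "nas_iter f (k * m) = g ^^ k" for k
  proof (induction k)
    case 0 then show ?case by simp
  next
    case (Suc k)
    have "nas_iter f (Suc k * m) = nas_iter f (k * m + m)" by (simp add: add.commute)
    also have "\<dots> = (g ^^ k) \<circ> g" using shift Suc by simp
    also have "\<dots> = g ^^ Suc k" by (simp only: funpow_Suc_right)
    finally show ?case .
  qed
  have FX: "nas_iter f n ` X \<subseteq> X \<and> continuous_on X (nas_iter f n)" for n
  proof (induction n)
    case 0 then show ?case by (simp add: continuous_on_id)
  next
    case (Suc n)
    have "continuous_on X (f (Suc n) \<circ> nas_iter f n)"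
      by (rule continuous_on_compose) (use Suc assms(5)[of "Suc n"] continuous_on_subset in blast)+
    moreover have "(f (Suc n) \<circ> nas_iter f n) ` X \<subseteq> X" using Suc assms(6)[of "Suc n"] by auto
    ultimately show ?case by simp
  qed
  have gc: "continuous_on X (g ^^ i)" "(g ^^ i) ` X \<subseteq> X" for i
    using FX[of "i * m"] km[of i] by auto
  have T: "nas_transitive X f"
    unfolding nas_transitive_def
  proof (intro allI impI)
    fix U V assume "openin (top_of_set X) U" "openin (top_of_set X) V" "U \<noteq> {}" "V \<noteq> {}"
    then obtain n where "n > 0" "(g ^^ n) ` U \<inter> V \<noteq> {}"
      using assms(7) unfolding aut_transitive_def g_def by blast
    then show "\<exists>n>0. nas_iter f n ` U \<inter> V \<noteq> {}"
      using km[of n] assms(3) by (intro exI[of _ "n * m"]) auto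
  qed
  have "{x \<in> X. aut_periodic_point g x} \<subseteq> {x \<in> X. nas_periodic_point f x}"
  proof safe
    fix x assume "x \<in> X" "aut_periodic_point g x"
    then obtain n where n: "n > 0" "(g ^^ n) x = x" unfolding aut_periodic_point_def by blast
    have "nas_iter f (n * m * k) x = x" for k
      using km[of "n * k"] funpow_period[OF n(2), of k] by (simp add: mult.commute mult.left_commute)
    then show "nas_periodic_point f x" unfolding nas_periodic_point_def
      using n assms(3) by (intro exI[of _ "n * m"]) auto
  qed
  then have DP: "nas_dense_periodic X f"
    using assms(8) closure_mono unfolding aut_dense_periodic_def nas_dense_periodic_def g_def
    by blast
  obtain \<delta> where d: "\<delta> > 0" "\<forall>x\<in>X. \<forall>U. openin (top_of_set X) U \<longrightarrow> x \<in> U \<longrightarrow>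
            (\<exists>y\<in>U. \<exists>N. dist ((g ^^ N) x) ((g ^^ N) y) > \<delta>)"
    using banks[OF gc(1) gc(2) assms(2)] assms(7,8) unfolding g_def by blast
  have S: "nas_sensitive X f"
    unfolding nas_sensitive_def
  proof (intro exI[of _ \<delta>] conjI ballI allI impI)
    show "\<delta> > 0" by (rule d(1))
    fix x U assume "x \<in> X" "openin (top_of_set X) U" "x \<in> U"
    then obtain y N where "y \<in> U" "dist ((g ^^ N) x) ((g ^^ N) y) > \<delta>" using d(2) by blast
    then show "\<exists>y\<in>U. \<exists>n. \<delta> < dist (nas_iter f n x) (nas_iter f n y)"
      using km[of N] by (intro bexI[of _ y] exI[of _ "N * m"]) simp_all
  qed
  show ?thesis unfolding nas_devaney_chaotic_def using T DP S by blast
qed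

end
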